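(* Let $\mathbf{G}=(G_1,\dots,G_5)$ be a $5$-multigraph on four vertices not containing three crossing pairs and set $e=e(\mathbf{G})$. (i) If $e\ge 23$, then there exists an enumeration $V(\mathbf{G})=\{w,x,y,z\}$ such that $e(w,x)+e(y,z)\le 5$. (ii) If $e\ge 22$, then there exist two distinct vertices $u$ and $v$ with $e(u,v)=5$.
   Context: A $5$-multigraph $\mathbf{G}=(G_1,\dots,G_5)$ is a $5$-tuple of simple graphs on a common vertex set $V(\mathbf{G})$; $e(\mathbf{G})=\sum_{i=1}^5 e(G_i)$, and for distinct vertices $u,v$ the multiplicity $e(u,v)$ is the number of indices $i$ with $uv\in E(G_i)$. $\mathbf{G}$ contains three crossing pairs if there are three distinct indices $i,j,k\in[5]$ and four distinct vertices $w,x,y,z$ with $wx,yz\in E(G_i)$, $wy,xz\in E(G_j)$ and $wz,xy\in E(G_k)$. *)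

theory Defs
  imports Main
begin

definition simple_graph_on :: "'a set \<Rightarrow> ('a \<Rightarrow> 'a \<Rightarrow> bool) \<Rightarrow> bool" where
  "simple_graph_on V E \<longleftrightarrow>
     (\<forall>u v. E u v \<longrightarrow> u \<in> V \<and> v \<in> V) \<and> (\<forall>u. \<not> E u u) \<and> (\<forall>u v. E u v \<longrightarrow> E v u)"

definition multigraph5 :: "'a set \<Rightarrow> (nat \<Rightarrow> 'a \<Rightarrow> 'a \<Rightarrow> bool) \<Rightarrow> bool" where
  "multigraph5 V G \<longleftrightarrow> (\<forall>i\<in>{1..5}. simple_graph_on V (G i))"

definition edges :: "('a \<Rightarrow> 'a \<Rightarrow> bool) \<Rightarrow> 'a set set" where
  "edges E = {{u, v} | u v. E u v}"

definition total_edges :: "(nat \<Rightarrow> 'a \<Rightarrow> 'a \<Rightarrow> bool) \<Rightarrow> nat" where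
  "total_edges G = (\<Sum>i\<in>{1..5}. card (edges (G i)))"

definition mult :: "(nat \<Rightarrow> 'a \<Rightarrow> 'a \<Rightarrow> bool) \<Rightarrow> 'a \<Rightarrow> 'a \<Rightarrow> nat" where
  "mult G u v = card {i\<in>{1..5}. G i u v}"

definition three_crossing_pairs :: "'a set \<Rightarrow> (nat \<Rightarrow> 'a \<Rightarrow> 'a \<Rightarrow> bool) \<Rightarrow> bool" where
  "three_crossing_pairs V G \<longleftrightarrow>
     (\<exists>i j k w x y z. i \<in> {1..5} \<and> j \<in> {1..5} \<and> k \<in> {1..5} \<and>
        i \<noteq> j \<and> i \<noteq> k \<and> j \<noteq> k \<and>
        w \<in> V \<and> x \<in> V \<and> y \<in> V \<and> z \<in> V \<and> distinct [w, x, y, z] \<and>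
        G i w x \<and> G i y z \<and> G j w y \<and> G j x z \<and> G k w z \<and> G k x y)"

end

theory Submission
  imports Defs
begin

lemma card_filter_sum: "card {i\<in>(A::nat set). P i} = (\<Sum>i\<in>A. of_bool (P i))" if "finite A"
proof -
  have "{i\<in>A. P i} = A \<inter> {x. P x}" by auto
  then show ?thesis using that by simp
qed

lemma greedy:
  fixes A B C :: "nat set"
  assumes "finite A" "finite B" "finite C" "card A \<ge> 1" "card B \<ge> 2" "card C \<ge> 3"
  shows "\<exists>a\<in>A. \<exists>b\<in>B. \<exists>c\<in>C. a \<noteq> b \<and> a \<noteq> c \<and> b \<noteq> c"
proof -
  have "A \<noteq> {}"
  proof
    assume e: "A = {}"
    have "card A = 0" unfolding e by simp
    then show False using assms(4) by linarith
  qed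
  then obtain a where a: "a \<in> A" by blast
  have "card B - card {a} \<le> card (B - {a})" by (rule diff_card_le_card_Diff) simp
  moreover have "card {a} = 1" by simp
  ultimately have cB: "card (B - {a}) \<ge> 1" using assms(5) by linarith
  have "B - {a} \<noteq> {}"
  proof
    assume e: "B - {a} = {}"
    have "card (B - {a}) = 0" unfolding e by simp
    then show False using cB by linarith
  qed
  then obtain b where b: "b \<in> B" "b \<noteq> a" by blast
  have "card C - card {a,b} \<le> card (C - {a,b})" by (rule diff_card_le_card_Diff) simp
  moreover have "card {a,b} = 2" using b(2) by simp
  ultimately have cC: "card (C - {a,b}) \<ge> 1" using assms(6) by linarith
  have "C - {a,b} \<noteq> {}"
  proof
    assume e: "C - {a,b} = {}"
    have "card (C - {a,b}) = 0" unfolding e by simp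
    then show False using cC by linarith
  qed
  then obtain c where c: "c \<in> C" "c \<noteq> a" "c \<noteq> b" by blast
  show ?thesis
    apply (rule bexI[where x=a])
     apply (rule bexI[where x=b])
      apply (rule bexI[where x=c])
    using a b c by auto
qed

lemma edges_card:
  assumes sg: "simple_graph_on V E" and V: "V = {w,x,y,z}" and d: "distinct [w,x,y,z]"
  shows "card (edges E) = of_bool (E w x) + of_bool (E y z) + of_bool (E w y) + of_bool (E x z)
           + of_bool (E w z) + of_bool (E x y)"
proof -
  define P where "P = {{w,x},{y,z},{w,y},{x,z},{w,z},{x,y}}"
  have sub: "edges E \<subseteq> P"
  proof
    fix p assume "p \<in> edges E"
    then obtain u v where p: "p = {u,v}" "E u v" unfolding edges_def by auto
    then have "u \<in> V" "v \<in> V" "u \<noteq> v" using sg unfolding simple_graph_on_def by metis+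
    then show "p \<in> P" using p V unfolding P_def by auto
  qed
  have mem: "{u,v} \<in> edges E \<longleftrightarrow> E u v" if "u \<noteq> v" for u v
  proof
    assume "{u,v} \<in> edges E"
    then obtain a b where "{u,v} = {a,b}" "E a b" unfolding edges_def by auto
    then show "E u v" using sg unfolding simple_graph_on_def by (metis doubleton_eq_iff)
  next
    assume "E u v" then show "{u,v} \<in> edges E" unfolding edges_def by auto
  qed
  have "card (edges E) = card {p\<in>P. p \<in> edges E}" 
  proof -
    have "{p\<in>P. p \<in> edges E} = edges E" using sub by auto
    then show ?thesis by simp
  qed
  also have "\<dots> = (\<Sum>p\<in>P. of_bool (p \<in> edges E))"
  proof -
    have "{p\<in>P. p \<in> edges E} = P \<inter> {p. p \<in> edges E}" by auto
    moreover have "finite P" unfolding P_def by simp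
    ultimately show ?thesis by (simp only: sum_of_bool_eq) simp
  qed
  also have "\<dots> = of_bool (E w x) + of_bool (E y z) + of_bool (E w y) + of_bool (E x z)
           + of_bool (E w z) + of_bool (E x y)"
  proof -
    have n: "{w,x} \<notin> {{y,z},{w,y},{x,z},{w,z},{x,y}}" "{y,z} \<notin> {{w,y},{x,z},{w,z},{x,y}}"
      "{w,y} \<notin> {{x,z},{w,z},{x,y}}" "{x,z} \<notin> {{w,z},{x,y}}" "{w,z} \<notin> {{x,y}}"
      using d by (simp_all add: doubleton_eq_iff) blast+
    have "(\<Sum>p\<in>P. of_bool (p \<in> edges E) :: nat) = of_bool ({w,x} \<in> edges E) + of_bool ({y,z} \<in> edges E)
      + of_bool ({w,y} \<in> edges E) + of_bool ({x,z} \<in> edges E) + of_bool ({w,z} \<in> edges E) + of_bool ({x,y} \<in> edges E)"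
      unfolding P_def
      by (simp only: sum.insert[OF _ n(1)] sum.insert[OF _ n(2)] sum.insert[OF _ n(3)] sum.insert[OF _ n(4)]
          sum.insert[OF _ n(5)] finite.emptyI finite.insertI sum.empty add.assoc add_0_right sum.insert[of "{}"] empty_iff not_False_eq_True)
    then show ?thesis using d by (simp add: mem del: sum_of_bool_eq)
  qed
  finally show ?thesis .
qed

lemma no_sdr_cases:
  fixes S1 S2 S3 :: "nat set"
  assumes f: "finite S1" "finite S2" "finite S3"
    and no: "\<not> (\<exists>i\<in>S1. \<exists>j\<in>S2. \<exists>k\<in>S3. i \<noteq> j \<and> i \<noteq> k \<and> j \<noteq> k)"
  shows "\<not> (card S1 \<ge> 1 \<and> card S2 \<ge> 2 \<and> card S3 \<ge> 3)"
    "\<not> (card S1 \<ge> 1 \<and> card S3 \<ge> 2 \<and> card S2 \<ge> 3)"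
    "\<not> (card S2 \<ge> 1 \<and> card S1 \<ge> 2 \<and> card S3 \<ge> 3)"
    "\<not> (card S2 \<ge> 1 \<and> card S3 \<ge> 2 \<and> card S1 \<ge> 3)"
    "\<not> (card S3 \<ge> 1 \<and> card S1 \<ge> 2 \<and> card S2 \<ge> 3)"
    "\<not> (card S3 \<ge> 1 \<and> card S2 \<ge> 2 \<and> card S1 \<ge> 3)"
proof -
  have noR: "i = j \<or> i = k \<or> j = k" if "i \<in> S1" "j \<in> S2" "k \<in> S3" for i j k
    using no that by blast
  show "\<not> (card S1 \<ge> 1 \<and> card S2 \<ge> 2 \<and> card S3 \<ge> 3)"
  proof
    assume h: "card S1 \<ge> 1 \<and> card S2 \<ge> 2 \<and> card S3 \<ge> 3"
    obtain a b c where abc: "a \<in> S1" "b \<in> S2" "c \<in> S3" "a \<noteq> b" "a \<noteq> c" "b \<noteq> c"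
      using greedy[OF f(1) f(2) f(3) conjunct1[OF h] conjunct1[OF conjunct2[OF h]] conjunct2[OF conjunct2[OF h]]] by blast
    show False using noR[OF abc(1) abc(2) abc(3)] abc(4-6) by auto
  qed
  show "\<not> (card S1 \<ge> 1 \<and> card S3 \<ge> 2 \<and> card S2 \<ge> 3)"
  proof
    assume h: "card S1 \<ge> 1 \<and> card S3 \<ge> 2 \<and> card S2 \<ge> 3"
    obtain a b c where abc: "a \<in> S1" "b \<in> S3" "c \<in> S2" "a \<noteq> b" "a \<noteq> c" "b \<noteq> c"
      using greedy[OF f(1) f(3) f(2) conjunct1[OF h] conjunct1[OF conjunct2[OF h]] conjunct2[OF conjunct2[OF h]]] by blast
    show False using noR[OF abc(1) abc(3) abc(2)] abc(4-6) by auto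
  qed
  show "\<not> (card S2 \<ge> 1 \<and> card S1 \<ge> 2 \<and> card S3 \<ge> 3)"
  proof
    assume h: "card S2 \<ge> 1 \<and> card S1 \<ge> 2 \<and> card S3 \<ge> 3"
    obtain a b c where abc: "a \<in> S2" "b \<in> S1" "c \<in> S3" "a \<noteq> b" "a \<noteq> c" "b \<noteq> c"
      using greedy[OF f(2) f(1) f(3) conjunct1[OF h] conjunct1[OF conjunct2[OF h]] conjunct2[OF conjunct2[OF h]]] by blast
    show False using noR[OF abc(2) abc(1) abc(3)] abc(4-6) by auto
  qed
  show "\<not> (card S2 \<ge> 1 \<and> card S3 \<ge> 2 \<and> card S1 \<ge> 3)"
  proof
    assume h: "card S2 \<ge> 1 \<and> card S3 \<ge> 2 \<and> card S1 \<ge> 3"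
    obtain a b c where abc: "a \<in> S2" "b \<in> S3" "c \<in> S1" "a \<noteq> b" "a \<noteq> c" "b \<noteq> c"
      using greedy[OF f(2) f(3) f(1) conjunct1[OF h] conjunct1[OF conjunct2[OF h]] conjunct2[OF conjunct2[OF h]]] by blast
    show False using noR[OF abc(3) abc(1) abc(2)] abc(4-6) by auto
  qed
  show "\<not> (card S3 \<ge> 1 \<and> card S1 \<ge> 2 \<and> card S2 \<ge> 3)"
  proof
    assume h: "card S3 \<ge> 1 \<and> card S1 \<ge> 2 \<and> card S2 \<ge> 3"
    obtain a b c where abc: "a \<in> S3" "b \<in> S1" "c \<in> S2" "a \<noteq> b" "a \<noteq> c" "b \<noteq> c"
      using greedy[OF f(3) f(1) f(2) conjunct1[OF h] conjunct1[OF conjunct2[OF h]] conjunct2[OF conjunct2[OF h]]] by blast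
    show False using noR[OF abc(2) abc(3) abc(1)] abc(4-6) by auto
  qed
  show "\<not> (card S3 \<ge> 1 \<and> card S2 \<ge> 2 \<and> card S1 \<ge> 3)"
  proof
    assume h: "card S3 \<ge> 1 \<and> card S2 \<ge> 2 \<and> card S1 \<ge> 3"
    obtain a b c where abc: "a \<in> S3" "b \<in> S2" "c \<in> S1" "a \<noteq> b" "a \<noteq> c" "b \<noteq> c"
      using greedy[OF f(3) f(2) f(1) conjunct1[OF h] conjunct1[OF conjunct2[OF h]] conjunct2[OF conjunct2[OF h]]] by blast
    show False using noR[OF abc(3) abc(2) abc(1)] abc(4-6) by auto
  qed
qed

lemma pair_bound:
  fixes G :: "nat \<Rightarrow> 'a \<Rightarrow> 'a \<Rightarrow> bool"
  shows "mult G a b + mult G c d \<le> 5 + card {i\<in>{1..5}. G i a b \<and> G i c d}"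
proof -
  have "mult G a b + mult G c d = (\<Sum>i\<in>{1..5::nat}. of_bool (G i a b) + of_bool (G i c d))"
    unfolding mult_def by (simp only: card_filter_sum finite_atLeastAtMost sum.distrib)
  also have "\<dots> \<le> (\<Sum>i\<in>{1..5::nat}. 1 + of_bool (G i a b \<and> G i c d))"
    by (rule sum_mono) auto
  also have "\<dots> = 5 + card {i\<in>{1..5}. G i a b \<and> G i c d}"
    by (simp only: card_filter_sum finite_atLeastAtMost sum.distrib) simp
  finally show ?thesis .
qed

lemma mult_le5: "mult G a b \<le> 5"
proof -
  have "mult G a b \<le> card {1..5::nat}" unfolding mult_def by (rule card_mono) auto
  then show ?thesis by simp
qed

lemma card_le5: "card {i\<in>{1..5::nat}. P i} \<le> 5"
proof -
  have "card {i\<in>{1..5::nat}. P i} \<le> card {1..5::nat}" by (rule card_mono) auto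
  then show ?thesis by simp
qed

lemma core: fixes n1 n2 n3 :: nat
  assumes "n1 \<ge> 1" "n2 \<ge> 1" "n3 \<ge> 1"
   "\<not> (n1 \<ge> 1 \<and> n2 \<ge> 2 \<and> n3 \<ge> 3)"
    "\<not> (n1 \<ge> 1 \<and> n3 \<ge> 2 \<and> n2 \<ge> 3)"
    "\<not> (n2 \<ge> 1 \<and> n1 \<ge> 2 \<and> n3 \<ge> 3)"
    "\<not> (n2 \<ge> 1 \<and> n3 \<ge> 2 \<and> n1 \<ge> 3)"
    "\<not> (n3 \<ge> 1 \<and> n1 \<ge> 2 \<and> n2 \<ge> 3)"
    "\<not> (n3 \<ge> 1 \<and> n2 \<ge> 2 \<and> n1 \<ge> 3)"
  shows "(n1 \<le> 1 \<and> n2 \<le> 1) \<or> (n1 \<le> 1 \<and> n3 \<le> 1) \<or> (n2 \<le> 1 \<and> n3 \<le> 1) \<or> (n1 \<le> 2 \<and> n2 \<le> 2 \<and> n3 \<le> 2)"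
proof (cases "n1 \<ge> 3")
  case True then show ?thesis using assms by auto
next
  case n1: False
  show ?thesis
  proof (cases "n2 \<ge> 3")
    case True then show ?thesis using assms by auto
  next
    case n2: False
    show ?thesis
    proof (cases "n3 \<ge> 3")
      case True then show ?thesis using assms by auto
    next
      case False then show ?thesis using n1 n2 by auto
    qed
  qed
qed

lemma t1: fixes a b c d e f n1 n2 n3 t :: nat
  assumes "t \<ge> 23" "t = a+b+c+d+e+f" "a+b \<le> 5 + n1" "c+d \<le> 5+n2" "e+f \<le> 5+n3"
   "a \<le> 5" "b \<le> 5" "c \<le> 5" "d \<le> 5" "e \<le> 5" "f \<le> 5"
   "\<not> (n1 \<ge> 1 \<and> n2 \<ge> 2 \<and> n3 \<ge> 3)"
    "\<not> (n1 \<ge> 1 \<and> n3 \<ge> 2 \<and> n2 \<ge> 3)"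
    "\<not> (n2 \<ge> 1 \<and> n1 \<ge> 2 \<and> n3 \<ge> 3)"
    "\<not> (n2 \<ge> 1 \<and> n3 \<ge> 2 \<and> n1 \<ge> 3)"
    "\<not> (n3 \<ge> 1 \<and> n1 \<ge> 2 \<and> n2 \<ge> 3)"
    "\<not> (n3 \<ge> 1 \<and> n2 \<ge> 2 \<and> n1 \<ge> 3)"
  shows "a+b \<le> 5 \<or> c+d \<le> 5 \<or> e+f \<le> 5"
proof (rule ccontr)
  assume "\<not> ?thesis"
  then have s: "a+b \<ge> 6" "c+d \<ge> 6" "e+f \<ge> 6" by auto
  then have n: "n1 \<ge> 1" "n2 \<ge> 1" "n3 \<ge> 1" using assms(3-5) by linarith+
  have "(n1 \<le> 1 \<and> n2 \<le> 1) \<or> (n1 \<le> 1 \<and> n3 \<le> 1) \<or> (n2 \<le> 1 \<and> n3 \<le> 1) \<or> (n1 \<le> 2 \<and> n2 \<le> 2 \<and> n3 \<le> 2)"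
    by (rule core[OF n assms(12-17)])
  then show False
  proof (elim disjE conjE)
  qed (use assms(1-11) in linarith)+
qed

lemma t2: fixes a b c d e f n1 n2 n3 t :: nat
  assumes "t \<ge> 22" "t = a+b+c+d+e+f" "a+b \<le> 5 + n1" "c+d \<le> 5+n2" "e+f \<le> 5+n3"
   "a \<le> 5" "b \<le> 5" "c \<le> 5" "d \<le> 5" "e \<le> 5" "f \<le> 5"
   "\<not> (n1 \<ge> 1 \<and> n2 \<ge> 2 \<and> n3 \<ge> 3)"
    "\<not> (n1 \<ge> 1 \<and> n3 \<ge> 2 \<and> n2 \<ge> 3)"
    "\<not> (n2 \<ge> 1 \<and> n1 \<ge> 2 \<and> n3 \<ge> 3)"
    "\<not> (n2 \<ge> 1 \<and> n3 \<ge> 2 \<and> n1 \<ge> 3)"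
    "\<not> (n3 \<ge> 1 \<and> n1 \<ge> 2 \<and> n2 \<ge> 3)"
    "\<not> (n3 \<ge> 1 \<and> n2 \<ge> 2 \<and> n1 \<ge> 3)"
  shows "a = 5 \<or> b = 5 \<or> c = 5 \<or> d = 5 \<or> e = 5 \<or> f = 5"
proof (rule ccontr)
  assume "\<not> ?thesis"
  then have s: "a \<le> 4" "b \<le> 4" "c \<le> 4" "d \<le> 4" "e \<le> 4" "f \<le> 4" using assms(6-11) by auto
  then have n: "n1 \<ge> 1" "n2 \<ge> 1" "n3 \<ge> 1" using assms(1-5) by linarith+
  have "(n1 \<le> 1 \<and> n2 \<le> 1) \<or> (n1 \<le> 1 \<and> n3 \<le> 1) \<or> (n2 \<le> 1 \<and> n3 \<le> 1) \<or> (n1 \<le> 2 \<and> n2 \<le> 2 \<and> n3 \<le> 2)"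
    by (rule core[OF n assms(12-17)])
  then show False
  proof (elim disjE conjE)
  qed (use assms(1-5) s in linarith)+
qed

theorem lemma3p5:
  fixes V :: "'a set" and G :: "nat \<Rightarrow> 'a \<Rightarrow> 'a \<Rightarrow> bool"
  assumes "multigraph5 V G"
    and "finite V" and "card V = 4"
    and "\<not> three_crossing_pairs V G"
  shows "(total_edges G \<ge> 23 \<longrightarrow>
            (\<exists>w x y z. V = {w, x, y, z} \<and> distinct [w, x, y, z] \<and>
                        mult G w x + mult G y z \<le> 5))
       \<and> (total_edges G \<ge> 22 \<longrightarrow>
            (\<exists>u v. u \<in> V \<and> v \<in> V \<and> u \<noteq> v \<and> mult G u v = 5))"
proof -
  have "card V = Suc 3" using assms(3) by simp
  then have "\<exists>b B. V = insert b B \<and> b \<notin> B \<and> card B = 3 \<and> (3 = (0::nat) \<longrightarrow> B = {})"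
    using card_Suc_eq[of V 3] by blast
  then obtain w B where wB: "V = insert w B" "w \<notin> B" "card B = 3" by blast
  then obtain x y z where B: "B = {x,y,z}" "x \<noteq> y" "y \<noteq> z" "x \<noteq> z" by (auto simp: card_3_iff)
  have V: "V = {w,x,y,z}" using wB B by simp
  have d: "distinct [w,x,y,z]" using wB B by auto
  have tot: "total_edges G = (\<Sum>i\<in>{1..5::nat}. of_bool (G i w x) + of_bool (G i y z) + of_bool (G i w y) + of_bool (G i x z)
           + of_bool (G i w z) + of_bool (G i x y))"
    unfolding total_edges_def
  proof (rule sum.cong)
    fix i :: nat assume "i \<in> {1..5}"
    then have "simple_graph_on V (G i)" using assms(1) unfolding multigraph5_def by blast
    show "card (edges (G i)) = of_bool (G i w x) + of_bool (G i y z) + of_bool (G i w y) + of_bool (G i x z)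
           + of_bool (G i w z) + of_bool (G i x y)" by (rule edges_card[OF \<open>simple_graph_on V (G i)\<close> V d])
  qed simp
  have tot2: "total_edges G = mult G w x + mult G y z + mult G w y + mult G x z + mult G w z + mult G x y"
    unfolding tot mult_def by (simp only: card_filter_sum finite_atLeastAtMost sum.distrib)
  define S1 where "S1 = {i\<in>{1..5::nat}. G i w x \<and> G i y z}"
  define S2 where "S2 = {i\<in>{1..5::nat}. G i w y \<and> G i x z}"
  define S3 where "S3 = {i\<in>{1..5::nat}. G i w z \<and> G i x y}"
  have b1: "mult G w x + mult G y z \<le> 5 + card S1" unfolding S1_def by (rule pair_bound)
  have b2: "mult G w y + mult G x z \<le> 5 + card S2" unfolding S2_def by (rule pair_bound)
  have b3: "mult G w z + mult G x y \<le> 5 + card S3" unfolding S3_def by (rule pair_bound)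
  have c5: "card S1 \<le> 5" "card S2 \<le> 5" "card S3 \<le> 5" unfolding S1_def S2_def S3_def by (rule card_le5)+
  have m5: "mult G w x \<le> 5" "mult G y z \<le> 5" "mult G w y \<le> 5" "mult G x z \<le> 5" "mult G w z \<le> 5" "mult G x y \<le> 5"
    by (rule mult_le5)+
  have f: "finite S1" "finite S2" "finite S3" unfolding S1_def S2_def S3_def by auto
  have no: "\<not> (\<exists>i\<in>S1. \<exists>j\<in>S2. \<exists>k\<in>S3. i \<noteq> j \<and> i \<noteq> k \<and> j \<noteq> k)"
  proof
    assume "\<exists>i\<in>S1. \<exists>j\<in>S2. \<exists>k\<in>S3. i \<noteq> j \<and> i \<noteq> k \<and> j \<noteq> k"
    then obtain i j k where ijk: "i \<in> S1" "j \<in> S2" "k \<in> S3" "i \<noteq> j" "i \<noteq> k" "j \<noteq> k" by blast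
    have wV: "w \<in> V" "x \<in> V" "y \<in> V" "z \<in> V" using V by auto
    have "three_crossing_pairs V G"
      unfolding three_crossing_pairs_def
      apply (rule exI[of _ i], rule exI[of _ j], rule exI[of _ k], rule exI[of _ w], rule exI[of _ x],
          rule exI[of _ y], rule exI[of _ z])
      using ijk d wV unfolding S1_def S2_def S3_def by simp
    then show False using assms(4) by blast
  qed
  note nc = no_sdr_cases[OF f no]
  show ?thesis
  proof (intro conjI impI)
    assume h: "total_edges G \<ge> 23"
    have "mult G w x + mult G y z \<le> 5 \<or> mult G w y + mult G x z \<le> 5 \<or> mult G w z + mult G x y \<le> 5"
      by (rule t1[OF h tot2 b1 b2 b3 m5 nc])
    then show "\<exists>w x y z. V = {w, x, y, z} \<and> distinct [w, x, y, z] \<and> mult G w x + mult G y z \<le> 5"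
    proof (elim disjE)
      assume h1: "mult G w x + mult G y z \<le> 5"
      show ?thesis
        by (rule exI[of _ w], rule exI[of _ x], rule exI[of _ y], rule exI[of _ z]) (use V d h1 in simp)
    next
      assume h1: "mult G w y + mult G x z \<le> 5"
      have vv: "V = {w,y,x,z}" "distinct [w,y,x,z]" using V d by auto
      show ?thesis
        by (rule exI[of _ w], rule exI[of _ y], rule exI[of _ x], rule exI[of _ z]) (use vv h1 in simp)
    next
      assume h1: "mult G w z + mult G x y \<le> 5"
      have vv: "V = {w,z,x,y}" "distinct [w,z,x,y]" using V d by auto
      show ?thesis
        by (rule exI[of _ w], rule exI[of _ z], rule exI[of _ x], rule exI[of _ y]) (use vv h1 in simp)
    qed
  next
    assume h: "total_edges G \<ge> 22"
    have wV: "w \<in> V" "x \<in> V" "y \<in> V" "z \<in> V" using V by auto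
    have "mult G w x = 5 \<or> mult G y z = 5 \<or> mult G w y = 5 \<or> mult G x z = 5 \<or> mult G w z = 5 \<or> mult G x y = 5"
      by (rule t2[OF h tot2 b1 b2 b3 m5 nc])
    then show "\<exists>u v. u \<in> V \<and> v \<in> V \<and> u \<noteq> v \<and> mult G u v = 5"
    proof (elim disjE)
      assume h5: "mult G w x = 5"
      show ?thesis by (rule exI[of _ w], rule exI[of _ x]) (use d wV h5 in simp)
    next
      assume h5: "mult G y z = 5"
      show ?thesis by (rule exI[of _ y], rule exI[of _ z]) (use d wV h5 in simp)
    next
      assume h5: "mult G w y = 5"
      show ?thesis by (rule exI[of _ w], rule exI[of _ y]) (use d wV h5 in simp)
    next
      assume h5: "mult G x z = 5"
      show ?thesis by (rule exI[of _ x], rule exI[of _ z]) (use d wV h5 in simp)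
    next
      assume h5: "mult G w z = 5"
      show ?thesis by (rule exI[of _ w], rule exI[of _ z]) (use d wV h5 in simp)
    next
      assume h5: "mult G x y = 5"
      show ?thesis by (rule exI[of _ x], rule exI[of _ y]) (use d wV h5 in simp)
    qed
  qed
qed

end
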